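(* Let $\Sigma$ be a finite alphabet and $C:\Sigma^k\to\Sigma^n$ a $(q,\delta,1,s)$-relaxed locally decodable code whose relaxed decoder is nonadaptive of the following form: for each $i\in[k]$ there is a distribution $\mathcal{Q}_i$ over $q$-element subsets of $[n]$ and for each $Q\in\mathrm{supp}(\mathcal{Q}_i)$ a function $f_{i,Q}:\Sigma^Q\to\Sigma\cup\{\bot\}$; on input $y$ and $i$ it samples $Q\sim\mathcal{Q}_i$ and outputs $f_{i,Q}(y|_Q)$. Fix $i\in[k]$ and a codeword $c=C(b)$. Let $c'\in\Sigma^n$ be the random word with $c'_j=c_j$ for $j\in L_i$ and $c'_j$ an independent uniformly random symbol of $\Sigma$ for $j\in H_i$. Then for every $(i,c)$-nonsmoothable query set $Q\in\mathrm{supp}(\mathcal{Q}_i)$, \[ \Pr_{c'}\bigl[f_{i,Q}(c'|_Q)\notin\{b_i,\bot\}\bigr]\ \ge\ |\Sigma|^{-|H(Q)|}\ \ge\ |\Sigma|^{-q}, \] where $H(Q):=Q\cap H_i$.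
   Context: $C$ is a $(q,\delta,1,s)$-RLDC if the decoder (outputs in $\Sigma\cup\{\bot\}$) satisfies, for all $b\in\Sigma^k$, $i\in[k]$, $y\in\Sigma^n$ with Hamming distance $\Delta(y,C(b))\le\delta n$: $\Pr[\mathsf{Dec}^{C(b)}(i)=b_i]=1$ and $\Pr[\mathsf{Dec}^y(i)\notin\{b_i,\bot\}]\le s$. $x|_S$ is the restriction of $x$ to coordinates in $S$. $p_i(j):=\Pr_{Q\sim\mathcal{Q}_i}[j\in Q]$, $H_i:=\{j:p_i(j)>q/(\delta n)\}$, $L_i:=[n]\setminus H_i$, $L(Q):=Q\cap L_i$. $Q$ is $(i,c)$-nonsmoothable if there exists $b'\in\Sigma^k$ with $C(b')|_{L(Q)}=c|_{L(Q)}$ and $b'_i\ne b_i$. *)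

theory Defs
  imports "HOL-Probability.Probability"
begin

(* Alphabet Sigma = finite type 'a; messages Sigma^k = 'k => 'a, words Sigma^n = 'n => 'a
   with 'k, 'n finite index types (k = CARD('k), n = CARD('n)).
   Output bottom is None, a symbol sigma is Some sigma. *)

definition hamming :: "('n \<Rightarrow> 'a) \<Rightarrow> ('n \<Rightarrow> 'a) \<Rightarrow> nat" where
  "hamming x y = card {j. x j \<noteq> y j}"

definition dec_dist ::
  "('k \<Rightarrow> 'n set pmf) \<Rightarrow> ('k \<Rightarrow> 'n set \<Rightarrow> ('n \<Rightarrow> 'a) \<Rightarrow> 'a option)
     \<Rightarrow> ('n \<Rightarrow> 'a) \<Rightarrow> 'k \<Rightarrow> 'a option pmf" where
  "dec_dist Qd f y i = map_pmf (\<lambda>Q. f i Q (restrict y Q)) (Qd i)"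

definition is_RLDC ::
  "(('k::finite \<Rightarrow> 'a) \<Rightarrow> ('n::finite \<Rightarrow> 'a)) \<Rightarrow> ('k \<Rightarrow> 'n set pmf)
     \<Rightarrow> ('k \<Rightarrow> 'n set \<Rightarrow> ('n \<Rightarrow> 'a) \<Rightarrow> 'a option) \<Rightarrow> nat \<Rightarrow> real \<Rightarrow> real \<Rightarrow> bool" where
  "is_RLDC C Qd f q \<delta> s \<longleftrightarrow>
     (\<forall>i. \<forall>Q \<in> set_pmf (Qd i). card Q = q) \<and>
     (\<forall>b i y. real (hamming y (C b)) \<le> \<delta> * real CARD('n) \<longrightarrow>
        measure_pmf.prob (dec_dist Qd f (C b) i) {Some (b i)} = 1 \<and>
        measure_pmf.prob (dec_dist Qd f y i) (- {Some (b i), None}) \<le> s)"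

definition query_prob :: "('k \<Rightarrow> 'n set pmf) \<Rightarrow> 'k \<Rightarrow> 'n \<Rightarrow> real" where
  "query_prob Qd i j = measure_pmf.prob (Qd i) {Q. j \<in> Q}"

definition heavy :: "('k \<Rightarrow> 'n::finite set pmf) \<Rightarrow> nat \<Rightarrow> real \<Rightarrow> 'k \<Rightarrow> 'n set" where
  "heavy Qd q \<delta> i = {j. query_prob Qd i j > real q / (\<delta> * real CARD('n))}"

definition light :: "('k \<Rightarrow> 'n::finite set pmf) \<Rightarrow> nat \<Rightarrow> real \<Rightarrow> 'k \<Rightarrow> 'n set" where
  "light Qd q \<delta> i = UNIV - heavy Qd q \<delta> i"

definition nonsmoothable ::
  "(('k \<Rightarrow> 'a) \<Rightarrow> ('n::finite \<Rightarrow> 'a)) \<Rightarrow> ('k \<Rightarrow> 'n set pmf) \<Rightarrow> nat \<Rightarrow> real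
     \<Rightarrow> 'k \<Rightarrow> ('k \<Rightarrow> 'a) \<Rightarrow> 'n set \<Rightarrow> bool" where
  "nonsmoothable C Qd q \<delta> i b Q \<longleftrightarrow>
     (\<exists>b'. (\<forall>j \<in> Q \<inter> light Qd q \<delta> i. C b' j = C b j) \<and> b' i \<noteq> b i)"

definition rerandomize :: "'n::finite set \<Rightarrow> ('n \<Rightarrow> 'a::finite) \<Rightarrow> ('n \<Rightarrow> 'a) pmf" where
  "rerandomize H c =
     map_pmf (\<lambda>g j. if j \<in> H then g j else c j)
       (Pi_pmf H undefined (\<lambda>_. pmf_of_set (UNIV :: 'a set)))"

end

theory Submission
  imports Defs
begin

lemma prob1_set:
  fixes p :: "'b pmf"
  assumes "measure_pmf.prob p {a} = 1" "x \<in> set_pmf p"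
  shows "x = a"
proof (rule ccontr)
  assume "x \<noteq> a"
  have "measure_pmf.prob p (- {a}) = 1 - measure_pmf.prob p {a}"
    by (simp add: measure_pmf.prob_compl[symmetric] Compl_eq_Diff_UNIV)
  hence "measure_pmf.prob p (- {a}) = 0" using assms by simp
  hence "set_pmf p \<inter> (- {a}) = {}" by (simp add: measure_pmf_zero_iff)
  thus False using assms(2) \<open>x \<noteq> a\<close> by auto
qed

theorem mainTheorem4:
  fixes C :: "('k::finite \<Rightarrow> 'a::finite) \<Rightarrow> ('n::finite \<Rightarrow> 'a)"
    and Qd :: "'k \<Rightarrow> 'n set pmf"
    and f :: "'k \<Rightarrow> 'n set \<Rightarrow> ('n \<Rightarrow> 'a) \<Rightarrow> 'a option"
    and q :: nat and \<delta> s :: real and i :: 'k and b :: "'k \<Rightarrow> 'a" and Q :: "'n set"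
  assumes "\<delta> > 0"
    and "is_RLDC C Qd f q \<delta> s"
    and "Q \<in> set_pmf (Qd i)"
    and "nonsmoothable C Qd q \<delta> i b Q"
  shows "measure_pmf.prob (rerandomize (heavy Qd q \<delta> i) (C b))
           {c'. f i Q (restrict c' Q) \<notin> {Some (b i), None}}
         \<ge> 1 / real CARD('a) ^ card (Q \<inter> heavy Qd q \<delta> i)
       \<and> 1 / real CARD('a) ^ card (Q \<inter> heavy Qd q \<delta> i) \<ge> 1 / real CARD('a) ^ q"
proof -
  define H where "H = heavy Qd q \<delta> i"
  obtain b' where b': "\<And>j. j \<in> Q \<inter> light Qd q \<delta> i \<Longrightarrow> C b' j = C b j" "b' i \<noteq> b i"
    using assms(4) unfolding nonsmoothable_def by blast
  have cq: "card Q = q" using assms(2,3) unfolding is_RLDC_def by blast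
  have "real (hamming (C b') (C b')) \<le> \<delta> * real CARD('n)"
    using assms(1) by (simp add: hamming_def)
  hence p1: "measure_pmf.prob (dec_dist Qd f (C b') i) {Some (b' i)} = 1"
    using assms(2) unfolding is_RLDC_def by (elim conjE allE impE) auto
  have "f i Q (restrict (C b') Q) \<in> set_pmf (dec_dist Qd f (C b') i)"
    using assms(3) by (simp add: dec_dist_def)
  hence fb': "f i Q (restrict (C b') Q) = Some (b' i)"
    using prob1_set[OF p1] by blast
  have cardpos: "real CARD('a) \<ge> 1" by simp
  define B where "B = (\<lambda>x. if x \<in> Q then {C b' x} else (UNIV :: 'a set))"
  define \<phi> where "\<phi> = (\<lambda>(g::'n \<Rightarrow> 'a) j. if j \<in> H then g j else C b j)"
  let ?E = "{c'. f i Q (restrict c' Q) \<notin> {Some (b i), None}}"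
  have sub: "Pi H B \<subseteq> \<phi> -` ?E"
  proof
    fix g assume g: "g \<in> Pi H B"
    have "restrict (\<phi> g) Q = restrict (C b') Q"
    proof (rule ext)
      fix j show "restrict (\<phi> g) Q j = restrict (C b') Q j"
      proof (cases "j \<in> Q")
        case True
        show ?thesis
        proof (cases "j \<in> H")
          case True
          then show ?thesis using g \<open>j \<in> Q\<close> by (auto simp: \<phi>_def B_def Pi_def)
        next
          case False
          then show ?thesis using b'(1)[of j] \<open>j \<in> Q\<close>
            by (auto simp: \<phi>_def light_def H_def)
        qed
      qed simp
    qed
    thus "g \<in> \<phi> -` ?E" using fb' b'(2) by auto
  qed
  have "measure_pmf.prob (rerandomize H (C b)) ?E
      = measure_pmf.prob (Pi_pmf H undefined (\<lambda>_. pmf_of_set (UNIV :: 'a set))) (\<phi> -` ?E)"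
    unfolding rerandomize_def \<phi>_def by simp
  also have "\<dots> \<ge> measure_pmf.prob (Pi_pmf H undefined (\<lambda>_. pmf_of_set (UNIV :: 'a set))) (Pi H B)"
    using sub by (intro measure_pmf.finite_measure_mono) auto
  also have "measure_pmf.prob (Pi_pmf H undefined (\<lambda>_. pmf_of_set (UNIV :: 'a set))) (Pi H B)
     = (\<Prod>x\<in>H. measure_pmf.prob (pmf_of_set (UNIV :: 'a set)) (B x))"
    by (rule measure_Pi_pmf_Pi) simp
  also have "\<dots> = (\<Prod>x\<in>H. if x \<in> Q then 1 / real CARD('a) else 1)"
    by (intro prod.cong) (auto simp: B_def measure_pmf_of_set)
  also have "\<dots> = (\<Prod>x\<in>H \<inter> Q. 1 / real CARD('a))"
    by (simp add: prod.If_cases Int_commute)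
  also have "\<dots> = 1 / real CARD('a) ^ card (Q \<inter> H)"
    by (simp add: Int_commute power_one_over)
  finally have 1: "measure_pmf.prob (rerandomize H (C b)) ?E \<ge> 1 / real CARD('a) ^ card (Q \<inter> H)" .
  have "card (Q \<inter> H) \<le> q" using cq by (metis Int_lower1 card_mono finite)
  hence "real CARD('a) ^ card (Q \<inter> H) \<le> real CARD('a) ^ q"
    using cardpos by (intro power_increasing) auto
  hence 2: "1 / real CARD('a) ^ card (Q \<inter> H) \<ge> 1 / real CARD('a) ^ q"
    using cardpos by (intro divide_left_mono) auto
  show ?thesis using 1 2 unfolding H_def by blast
qed

end
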